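(* Let $1<p,q<\infty$ and $\theta_1,\theta_2>0$. There exist weight functions $a,b$ on $\mathbb R$ such that the dual space $(A_{q),\theta_2}^{p),\theta_1}(\mathbb R,a,b))^*$ is not canonically isometric to the associate space $(A_{q),\theta_2}^{p),\theta_1}(\mathbb R,a,b))'$.
   Context: A weight function on $\mathbb R^n$ is a positive, measurable, locally integrable function (vanishing at most on a set of measure zero). For $1<p<\infty$, $\theta\ge 0$ and a weight $a$, the generalized grand Lebesgue space $L_a^{p),\theta}(\mathbb R^n)$ is the space of measurable $f$ with $\|f\|_{L_a^{p),\theta}}=\sup_{0<\varepsilon\le p-1}\varepsilon^{\theta}\Big(\int_{\mathbb R^n}|f(x)|^{p-\varepsilon}a(x)^{\varepsilon/p}\,dx\Big)^{1/(p-\varepsilon)}<\infty$. The Fourier transform is $\hat f(\gamma)=\int f(x)e^{-i\langle\gamma,x\rangle}dx$, extended to tempered distributions. $A_{q),\theta_2}^{p),\theta_1}(\mathbb R^n,a,b)$ is the space of $f\in L_a^{p),\theta_1}(\mathbb R^n)$ whose Fourier transform belongs to $L_b^{q),\theta_2}(\mathbb R^n)$, with norm $\|f\|_{L_a^{p),\theta_1}}+\|\hat f\|_{L_b^{q),\theta_2}}$. The associate space $X'$ of a function space $X$ is the space of measurable $g$ with $\|g\|_{X'}=\sup\{\int|fg|\,dx:\|f\|_X\le1\}<\infty$; it embeds canonically into $X^*$ via $g\mapsto(f\mapsto\int fg\,dx)$. *)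

theory Defs
  imports "HOL-Analysis.Analysis"
begin

definition weight :: "(real \<Rightarrow> real) \<Rightarrow> bool" where
  "weight a \<longleftrightarrow> a \<in> borel_measurable lebesgue \<and> (\<forall>x. 0 \<le> a x)
     \<and> (AE x in lebesgue. 0 < a x)
     \<and> (\<forall>K. compact K \<longrightarrow> set_integrable lebesgue K a)"

definition gl_term :: "real \<Rightarrow> real \<Rightarrow> (real \<Rightarrow> real) \<Rightarrow> (real \<Rightarrow> complex) \<Rightarrow> real \<Rightarrow> ennreal" where
  "gl_term p \<theta> a f \<epsilon> =
     (let I = (\<integral>\<^sup>+ x. ennreal (cmod (f x) powr (p - \<epsilon>) * a x powr (\<epsilon> / p)) \<partial>lebesgue)
      in if I = \<infinity> then \<infinity> else ennreal (\<epsilon> powr \<theta> * enn2real I powr (1 / (p - \<epsilon>))))"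

definition gl_norm :: "real \<Rightarrow> real \<Rightarrow> (real \<Rightarrow> real) \<Rightarrow> (real \<Rightarrow> complex) \<Rightarrow> ennreal" where
  "gl_norm p \<theta> a f = (SUP \<epsilon>\<in>{0<..p - 1}. gl_term p \<theta> a f \<epsilon>)"

definition GL :: "real \<Rightarrow> real \<Rightarrow> (real \<Rightarrow> real) \<Rightarrow> (real \<Rightarrow> complex) set" where
  "GL p \<theta> a = {f. f \<in> borel_measurable lebesgue \<and> gl_norm p \<theta> a f < \<infinity>}"

primrec iter_deriv :: "nat \<Rightarrow> (real \<Rightarrow> complex) \<Rightarrow> real \<Rightarrow> complex" where
  "iter_deriv 0 \<phi> = \<phi>"
| "iter_deriv (Suc n) \<phi> = (\<lambda>x. vector_derivative (iter_deriv n \<phi>) (at x))"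

definition schwartz :: "(real \<Rightarrow> complex) \<Rightarrow> bool" where
  "schwartz \<phi> \<longleftrightarrow> (\<forall>n x. iter_deriv n \<phi> differentiable (at x))
     \<and> (\<forall>j k. bounded (range (\<lambda>x. complex_of_real (x ^ k) * iter_deriv j \<phi> x)))"

definition fourier :: "(real \<Rightarrow> complex) \<Rightarrow> real \<Rightarrow> complex" where
  "fourier \<phi> \<gamma> = (\<integral> x. \<phi> x * cis (- (\<gamma> * x)) \<partial>lebesgue)"

text \<open>g is the Fourier transform of f in the sense of tempered distributions:
  f and g act on Schwartz functions by integration and hat f(phi) = f(hat phi).\<close>
definition is_fourier_transform :: "(real \<Rightarrow> complex) \<Rightarrow> (real \<Rightarrow> complex) \<Rightarrow> bool" where
  "is_fourier_transform f g \<longleftrightarrow>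
     (\<forall>\<phi>. schwartz \<phi> \<longrightarrow>
        integrable lebesgue (\<lambda>x. f x * fourier \<phi> x) \<and>
        integrable lebesgue (\<lambda>x. g x * \<phi> x) \<and>
        (\<integral> x. g x * \<phi> x \<partial>lebesgue) = (\<integral> x. f x * fourier \<phi> x \<partial>lebesgue))"

definition A_space :: "real \<Rightarrow> real \<Rightarrow> real \<Rightarrow> real \<Rightarrow> (real \<Rightarrow> real) \<Rightarrow> (real \<Rightarrow> real)
     \<Rightarrow> (real \<Rightarrow> complex) set" where
  "A_space p \<theta>1 q \<theta>2 a b =
     {f. f \<in> GL p \<theta>1 a \<and> (\<exists>g. g \<in> GL q \<theta>2 b \<and> is_fourier_transform f g)}"

text \<open>The Fourier transform is unique a.e., so the infimum is just the norm of hat f.\<close>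
definition A_norm :: "real \<Rightarrow> real \<Rightarrow> real \<Rightarrow> real \<Rightarrow> (real \<Rightarrow> real) \<Rightarrow> (real \<Rightarrow> real)
     \<Rightarrow> (real \<Rightarrow> complex) \<Rightarrow> ennreal" where
  "A_norm p \<theta>1 q \<theta>2 a b f =
     gl_norm p \<theta>1 a f +
     (INF g\<in>{g. g \<in> GL q \<theta>2 b \<and> is_fourier_transform f g}. gl_norm q \<theta>2 b g)"

definition bounded_functional ::
  "(real \<Rightarrow> complex) set \<Rightarrow> ((real \<Rightarrow> complex) \<Rightarrow> ennreal) \<Rightarrow> ((real \<Rightarrow> complex) \<Rightarrow> complex) \<Rightarrow> bool" where
  "bounded_functional X N L \<longleftrightarrow>
     (\<forall>f\<in>X. \<forall>h\<in>X. \<forall>\<alpha> \<beta>::complex. L (\<lambda>x. \<alpha> * f x + \<beta> * h x) = \<alpha> * L f + \<beta> * L h)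
     \<and> (\<exists>C::real. \<forall>f\<in>X. ennreal (cmod (L f)) \<le> ennreal C * N f)"

definition dual_norm ::
  "(real \<Rightarrow> complex) set \<Rightarrow> ((real \<Rightarrow> complex) \<Rightarrow> ennreal) \<Rightarrow> ((real \<Rightarrow> complex) \<Rightarrow> complex) \<Rightarrow> ennreal" where
  "dual_norm X N L = (SUP f\<in>{f\<in>X. N f \<le> 1}. ennreal (cmod (L f)))"

definition assoc_norm ::
  "(real \<Rightarrow> complex) set \<Rightarrow> ((real \<Rightarrow> complex) \<Rightarrow> ennreal) \<Rightarrow> (real \<Rightarrow> complex) \<Rightarrow> ennreal" where
  "assoc_norm X N g = (SUP f\<in>{f\<in>X. N f \<le> 1}. \<integral>\<^sup>+ x. ennreal (cmod (f x * g x)) \<partial>lebesgue)"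

definition assoc_space ::
  "(real \<Rightarrow> complex) set \<Rightarrow> ((real \<Rightarrow> complex) \<Rightarrow> ennreal) \<Rightarrow> (real \<Rightarrow> complex) set" where
  "assoc_space X N = {g. g \<in> borel_measurable lebesgue \<and> assoc_norm X N g < \<infinity>}"

definition canon_embed :: "(real \<Rightarrow> complex) \<Rightarrow> (real \<Rightarrow> complex) \<Rightarrow> complex" where
  "canon_embed g = (\<lambda>f. \<integral> x. f x * g x \<partial>lebesgue)"

definition canonically_isometric ::
  "(real \<Rightarrow> complex) set \<Rightarrow> ((real \<Rightarrow> complex) \<Rightarrow> ennreal) \<Rightarrow> bool" where
  "canonically_isometric X N \<longleftrightarrow>
     (\<forall>g\<in>assoc_space X N. dual_norm X N (canon_embed g) = assoc_norm X N g) \<and>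
     (\<forall>L. bounded_functional X N L \<longrightarrow>
        (\<exists>g\<in>assoc_space X N. \<forall>f\<in>X. L f = canon_embed g f))"

end

theory Submission
  imports Defs "HOL-Probability.Characteristic_Functions" "HOL-Probability.Sinc_Integral"
    "HOL-Computational_Algebra.Polynomial"
begin


lemma gauss_ft_lborel:
  "(\<integral>x. of_real (std_normal_density x) * cis (- (t * x)) \<partial>lborel) = complex_of_real (exp (- t\<^sup>2 / 2))"
proof -
  have "char std_normal_distribution (-t) = complex_of_real (exp (- (t\<^sup>2) / 2))"
    by (simp add: char_std_normal_distribution)
  moreover have "char std_normal_distribution (-t) = (\<integral>x. std_normal_density x *\<^sub>R iexp (-t * x) \<partial>lborel)"
    unfolding char_def
    by (subst integral_density) auto
  moreover have "\<And>x. std_normal_density x *\<^sub>R iexp (-t * x) = of_real (std_normal_density x) * cis (- (t * x))"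
    by (simp add: cis_conv_exp scaleR_conv_of_real mult.commute)
  ultimately show ?thesis by simp
qed




lemma pow_fact_le_exp:
  fixes y :: real assumes "0 \<le> y" shows "y ^ n / fact n \<le> exp y"
proof -
  have "y ^ n / fact n \<le> (\<Sum>m\<le>n. y ^ m / fact m)"
    by (rule member_le_sum) (use assms in auto)
  also have "\<dots> \<le> exp y"
    using assms summable_exp_generic[of y]
    by (auto simp: exp_def divide_inverse ac_simps intro!: sum_le_suminf)
  finally show ?thesis .
qed

lemma abs_pow_gauss_bound:
  fixes x :: real shows "\<bar>x\<bar> ^ i * exp (- x\<^sup>2 / 2) \<le> 1 + 2 ^ i * fact i"
proof -
  define y where "y = x\<^sup>2 / 2"
  have y0: "0 \<le> y" by (simp add: y_def)
  have "\<bar>x\<bar> ^ i \<le> 1 + \<bar>x\<bar> ^ (2 * i)"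
  proof (cases "\<bar>x\<bar> \<le> 1")
    case True then have "\<bar>x\<bar> ^ i \<le> 1" by (simp add: power_le_one)
    then show ?thesis using zero_le_power[of "\<bar>x\<bar>" "2*i"] by linarith
  next
    case False then have "\<bar>x\<bar> ^ i \<le> \<bar>x\<bar> ^ (2 * i)" by (intro power_increasing) auto
    then show ?thesis by simp
  qed
  moreover have "\<bar>x\<bar> ^ (2 * i) = (2 * y) ^ i"
    by (simp add: y_def power_mult power2_abs)
  ultimately have "\<bar>x\<bar> ^ i * exp (- y) \<le> (1 + (2 * y) ^ i) * exp (- y)"
    by (intro mult_right_mono) auto
  also have "\<dots> = exp (- y) + 2 ^ i * (y ^ i * exp (- y))"
    by (simp add: algebra_simps power_mult_distrib)
  also have "\<dots> \<le> 1 + 2 ^ i * fact i"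
  proof -
    have "exp (- y) \<le> 1" using y0 by simp
    moreover have "y ^ i * exp (- y) \<le> fact i"
      using pow_fact_le_exp[OF y0, of i] by (simp add: exp_minus field_simps)
    ultimately show ?thesis by (intro add_mono mult_left_mono) auto
  qed
  finally show ?thesis by (simp add: y_def)
qed

lemma poly_gauss_bounded:
  fixes Q :: "real poly" shows "\<exists>C. \<forall>x. \<bar>poly Q x * exp (- x\<^sup>2 / 2)\<bar> \<le> C"
proof (intro exI allI)
  fix x :: real
  have "\<bar>poly Q x * exp (- x\<^sup>2 / 2)\<bar> = \<bar>\<Sum>i\<le>degree Q. coeff Q i * (x ^ i * exp (- x\<^sup>2 / 2))\<bar>"
    by (simp add: poly_altdef sum_distrib_right mult.assoc)
  also have "\<dots> \<le> (\<Sum>i\<le>degree Q. \<bar>coeff Q i\<bar> * (\<bar>x\<bar> ^ i * exp (- x\<^sup>2 / 2)))"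
    by (rule order_trans[OF sum_abs]) (simp add: abs_mult power_abs)
  also have "\<dots> \<le> (\<Sum>i\<le>degree Q. \<bar>coeff Q i\<bar> * (1 + 2 ^ i * fact i))"
    by (intro sum_mono mult_left_mono abs_pow_gauss_bound) auto
  finally show "\<bar>poly Q x * exp (- x\<^sup>2 / 2)\<bar> \<le> (\<Sum>i\<le>degree Q. \<bar>coeff Q i\<bar> * (1 + 2 ^ i * fact i))" .
qed

fun HP :: "nat \<Rightarrow> real poly" where
  "HP 0 = 1"
| "HP (Suc n) = pderiv (HP n) - [:0, 1:] * HP n"

definition gauss :: "real \<Rightarrow> complex" where
  "gauss x = complex_of_real (exp (- x\<^sup>2 / 2))"

lemma iter_deriv_gauss:
  "iter_deriv n gauss = (\<lambda>x. complex_of_real (poly (HP n) x * exp (- x\<^sup>2 / 2)))"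
proof (induction n)
  case 0 then show ?case by (simp add: gauss_def fun_eq_iff)
next
  case (Suc n)
  have D: "((\<lambda>x. complex_of_real (poly (HP n) x * exp (- x\<^sup>2 / 2))) has_vector_derivative
     complex_of_real (poly (HP (Suc n)) x * exp (- x\<^sup>2 / 2))) (at x)" for x
  proof -
    have "((\<lambda>x. poly (HP n) x * exp (- x\<^sup>2 / 2)) has_field_derivative
      (poly (pderiv (HP n)) x * exp (- x\<^sup>2 / 2) + poly (HP n) x * (exp (- x\<^sup>2 / 2) * (- (2 * x) / 2)))) (at x)"
      by (auto intro!: derivative_eq_intros poly_DERIV simp: power2_eq_square)
    moreover have "poly (pderiv (HP n)) x * exp (- x\<^sup>2 / 2) + poly (HP n) x * (exp (- x\<^sup>2 / 2) * (- (2 * x) / 2))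
        = poly (HP (Suc n)) x * exp (- x\<^sup>2 / 2)"
      by (simp add: algebra_simps)
    ultimately show ?thesis by (intro has_vector_derivative_of_real) simp
  qed
  show ?case unfolding iter_deriv.simps Suc.IH by (rule ext, rule vector_derivative_at[OF D])
qed

lemma schwartz_gauss: "schwartz gauss"
  unfolding schwartz_def
proof safe
  fix n x
  show "iter_deriv n gauss differentiable at x"
    unfolding iter_deriv_gauss
    by (intro differentiableI_vector) (auto intro!: derivative_eq_intros poly_DERIV)
next
  fix j k
  obtain C where C: "\<And>x. \<bar>poly (monom 1 k * HP j) x * exp (- x\<^sup>2 / 2)\<bar> \<le> C"
    using poly_gauss_bounded by blast
  show "bounded (range (\<lambda>x. complex_of_real (x ^ k) * iter_deriv j gauss x))"
    unfolding bounded_iff iter_deriv_gauss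
  proof (intro exI ballI, clarify)
    fix x :: real
    have "cmod (complex_of_real (x ^ k) * complex_of_real (poly (HP j) x * exp (- x\<^sup>2 / 2)))
        = \<bar>poly (monom 1 k * HP j) x * exp (- x\<^sup>2 / 2)\<bar>"
      by (simp add: poly_monom mult.assoc norm_mult abs_mult power_abs norm_power)
    then show "cmod (complex_of_real (x ^ k) * complex_of_real (poly (HP j) x * exp (- x\<^sup>2 / 2))) \<le> C"
      using C by simp
  qed
qed




lemma cis_borel[measurable]: "cis \<in> borel_measurable borel"
  by (intro borel_measurable_continuous_onI continuous_intros)

lemma schwartz_cont: "schwartz \<phi> \<Longrightarrow> continuous_on UNIV \<phi>"
  unfolding schwartz_def
  by (metis continuous_at_imp_continuous_on differentiable_imp_continuous_within iter_deriv.simps(1))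

lemma schwartz_borel: "schwartz \<phi> \<Longrightarrow> \<phi> \<in> borel_measurable borel"
  by (rule borel_measurable_continuous_onI[OF schwartz_cont])

lemma integrable_inv_sq: "integrable lborel (\<lambda>x::real. inverse (1 + x^2))"
proof -
  have "set_integrable lborel UNIV (\<lambda>x::real. inverse (1 + x^2))"
    using integrable_inverse_1_plus_square by (simp add: einterval_def)
  then show ?thesis by (simp add: set_integrable_def)
qed

lemma schwartz_integrable:
  assumes "schwartz \<phi>" shows "integrable lborel \<phi>"
proof -
  have b0: "bounded (range (\<lambda>x. complex_of_real (x ^ 0) * iter_deriv 0 \<phi> x))"
   and b2: "bounded (range (\<lambda>x. complex_of_real (x ^ 2) * iter_deriv 0 \<phi> x))"
    using assms unfolding schwartz_def by blast+
  obtain C0 where C0: "\<And>x. cmod (\<phi> x) \<le> C0"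
    using b0 unfolding bounded_iff by auto
  obtain C2 where C2: "\<And>x. cmod (complex_of_real (x ^ 2) * \<phi> x) \<le> C2"
    using b2 unfolding bounded_iff by auto
  have bnd: "cmod (\<phi> x) \<le> norm ((C0 + C2) * inverse (1 + x^2))" for x
  proof -
    have pos: "0 < 1 + x^2" by (simp add: add_pos_nonneg)
    have "cmod (\<phi> x) * (1 + x^2) = cmod (\<phi> x) + x^2 * cmod (\<phi> x)"
      by (simp add: algebra_simps)
    also have "\<dots> \<le> C0 + C2"
      using C0[of x] C2[of x] by (simp add: norm_mult norm_power)
    finally have "cmod (\<phi> x) \<le> (C0 + C2) * inverse (1 + x^2)"
      using pos by (simp add: field_simps)
    then show ?thesis by simp
  qed
  show ?thesis
    by (rule Bochner_Integration.integrable_bound[OF integrable_mult_right[OF integrable_inv_sq, of "C0 + C2"]])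
       (use schwartz_borel[OF assms] bnd in auto)
qed

definition fourierB :: "(real \<Rightarrow> complex) \<Rightarrow> real \<Rightarrow> complex" where
  "fourierB \<phi> \<gamma> = (\<integral> x. \<phi> x * cis (- (\<gamma> * x)) \<partial>lborel)"

lemma fourier_eq_B:
  assumes "\<phi> \<in> borel_measurable borel" shows "fourier \<phi> = fourierB \<phi>"
  unfolding fourier_def fourierB_def
  by (rule ext, rule integral_completion) (use assms in measurable)

lemma ft_swap:
  assumes wm: "w \<in> borel_measurable borel" and wi: "integrable lborel w"
    and pm: "\<phi> \<in> borel_measurable borel" and pi: "integrable lborel \<phi>"
  shows "integrable lborel (\<lambda>x. w x * fourierB \<phi> x)"
    and "integrable lborel (\<lambda>g. fourierB w g * \<phi> g)"
    and "(\<integral> g. fourierB w g * \<phi> g \<partial>lborel) = (\<integral> x. w x * fourierB \<phi> x \<partial>lborel)"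
proof -
  define F where "F x g = w x * \<phi> g * cis (- (g * x))" for x g
  have Fm: "(\<lambda>(x, g). F x g) \<in> borel_measurable (lborel \<Otimes>\<^sub>M lborel)"
    unfolding F_def using wm pm by measurable
  have "(\<integral>\<^sup>+ z. ennreal (norm (case z of (x, g) \<Rightarrow> F x g)) \<partial>(lborel \<Otimes>\<^sub>M lborel))
      = (\<integral>\<^sup>+ x. \<integral>\<^sup>+ g. ennreal (norm (w x)) * ennreal (norm (\<phi> g)) \<partial>lborel \<partial>lborel)"
  proof -
    have Fn: "(\<lambda>z. ennreal (norm (w (fst z))) * ennreal (norm (\<phi> (snd z)))) \<in> borel_measurable (lborel \<Otimes>\<^sub>M lborel)"
      using wm pm by measurable
    have "(\<integral>\<^sup>+ z. ennreal (norm (case z of (x, g) \<Rightarrow> F x g)) \<partial>(lborel \<Otimes>\<^sub>M lborel))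
       = (\<integral>\<^sup>+ z. ennreal (norm (w (fst z))) * ennreal (norm (\<phi> (snd z))) \<partial>(lborel \<Otimes>\<^sub>M lborel))"
      by (intro nn_integral_cong) (auto simp: F_def norm_mult ennreal_mult split: prod.splits)
    also have "\<dots> = (\<integral>\<^sup>+ x. \<integral>\<^sup>+ g. ennreal (norm (w x)) * ennreal (norm (\<phi> g)) \<partial>lborel \<partial>lborel)"
      using lborel.nn_integral_fst[OF Fn] by simp
    finally show ?thesis .
  qed
  also have "\<dots> = (\<integral>\<^sup>+ x. ennreal (norm (w x)) * (\<integral>\<^sup>+ g. ennreal (norm (\<phi> g)) \<partial>lborel) \<partial>lborel)"
    by (subst nn_integral_cmult) (use pm in auto)
  also have "\<dots> = (\<integral>\<^sup>+ x. ennreal (norm (w x)) \<partial>lborel) * (\<integral>\<^sup>+ g. ennreal (norm (\<phi> g)) \<partial>lborel)"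
    by (subst nn_integral_multc) (use wm in auto)
  also have "\<dots> < \<infinity>"
    using wi pi by (simp add: integrable_iff_bounded ennreal_mult_less_top)
  finally have Fi: "integrable (lborel \<Otimes>\<^sub>M lborel) (\<lambda>(x, g). F x g)"
    using Fm by (simp add: integrable_iff_bounded)
  have e1: "(\<integral> g. F x g \<partial>lborel) = w x * fourierB \<phi> x" for x
  proof -
    have "F x g = w x * (\<phi> g * cis (- (x * g)))" for g
      by (simp add: F_def mult.commute[of g x] mult.assoc)
    then show ?thesis unfolding fourierB_def by simp
  qed
  have e2: "(\<integral> x. F x g \<partial>lborel) = fourierB w g * \<phi> g" for g
  proof -
    have "F x g = (w x * cis (- (g * x))) * \<phi> g" for x
      by (simp add: F_def mult_ac)
    then show ?thesis unfolding fourierB_def by simp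
  qed
  show "integrable lborel (\<lambda>x. w x * fourierB \<phi> x)"
    using lborel_pair.integrable_fst[OF Fi] by (simp add: e1)
  show "integrable lborel (\<lambda>g. fourierB w g * \<phi> g)"
    using lborel_pair.integrable_snd[OF Fi] by (simp add: e2)
  show "(\<integral> g. fourierB w g * \<phi> g \<partial>lborel) = (\<integral> x. w x * fourierB \<phi> x \<partial>lborel)"
    using lborel_pair.Fubini_integral[OF Fi] by (simp add: e1 e2)
qed

lemma is_ft_integrable:
  assumes wm: "w \<in> borel_measurable borel" and wi: "integrable lborel w"
  shows "is_fourier_transform w (fourierB w)"
  unfolding is_fourier_transform_def
proof (intro allI impI conjI)
  fix \<phi> assume s: "schwartz \<phi>"
  note pm = schwartz_borel[OF s] and pi = schwartz_integrable[OF s]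
  note fe = fourier_eq_B[OF pm]
  note sw = ft_swap[OF wm wi pm pi]
  have m1: "(\<lambda>x. w x * fourierB \<phi> x) \<in> borel_measurable lborel"
    using borel_measurable_integrable[OF sw(1)] by simp
  have m2: "(\<lambda>g. fourierB w g * \<phi> g) \<in> borel_measurable lborel"
    using borel_measurable_integrable[OF sw(2)] by simp
  show "integrable lebesgue (\<lambda>x. w x * fourier \<phi> x)"
    unfolding fe using sw(1) integrable_completion[OF m1] by simp
  show "integrable lebesgue (\<lambda>x. fourierB w x * \<phi> x)"
    using sw(2) integrable_completion[OF m2] by simp
  show "(\<integral> x. fourierB w x * \<phi> x \<partial>lebesgue) = (\<integral> x. w x * fourier \<phi> x \<partial>lebesgue)"
    unfolding fe using sw(3) integral_completion[OF m1] integral_completion[OF m2] by simp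
qed




lemma nd_int: "(\<integral>\<^sup>+x. ennreal (normal_density \<mu> 1 x) \<partial>lborel) = 1"
  using prob_space.emeasure_space_1[OF prob_space_normal_density[where \<mu>=\<mu> and \<sigma>=1]]
  by (simp add: emeasure_density)

definition bw :: "real \<Rightarrow> real \<Rightarrow> real \<Rightarrow> real" where
  "bw M T \<gamma> = 1 + M * indicator {-T..T} \<gamma>"

definition wit :: "real \<Rightarrow> real \<Rightarrow> real \<Rightarrow> complex" where
  "wit \<delta> R x = complex_of_real (\<delta> * std_normal_density x) * cis (R * x)"

lemma bw_borel[measurable]: "bw M T \<in> borel_measurable borel"
  unfolding bw_def by measurable

lemma weight_one: "weight (\<lambda>_. 1)"
  unfolding weight_def
proof (intro conjI allI impI)
  fix K :: "real set" assume K: "compact K"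
  have "integrable lborel (\<lambda>x. indicator K x *\<^sub>R (1::real))"
    by (rule borel_integrable_compact[OF K]) (intro continuous_intros)
  moreover note borel_measurable_integrable[OF this]
  ultimately show "set_integrable lebesgue K (\<lambda>_. 1::real)"
    unfolding set_integrable_def using integrable_completion by blast
qed auto

lemma weight_bw: assumes "0 \<le> M" shows "weight (bw M T)"
  unfolding weight_def
proof (intro conjI allI impI)
  fix K :: "real set" assume K: "compact K"
  have Ks: "K \<in> sets lborel" using K by (simp add: borel_compact)
  have fin: "emeasure lborel K < \<infinity>" by (rule emeasure_bounded_finite[OF compact_imp_bounded[OF K]])
  have "integrable lborel (\<lambda>x. (1 + M) * indicator K x :: real)"
    using Ks fin by (intro integrable_mult_right integrable_real_indicator) auto
  then have "integrable lborel (\<lambda>x. indicator K x *\<^sub>R bw M T x)"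
    by (rule Bochner_Integration.integrable_bound)
       (use Ks assms in \<open>auto simp: bw_def indicator_def\<close>)
  moreover have "(\<lambda>x. indicator K x *\<^sub>R bw M T x) \<in> borel_measurable lborel"
    using Ks by measurable
  ultimately show "set_integrable lebesgue K (bw M T)"
    unfolding set_integrable_def using integrable_completion by blast
next
  show "bw M T \<in> borel_measurable lebesgue" by (rule measurable_completion) simp
qed (use assms in \<open>auto simp: bw_def indicator_def intro!: add_pos_nonneg AE_I2\<close>)

lemma fourierB_gauss: "fourierB gauss t = complex_of_real (sqrt (2 * pi) * exp (- t\<^sup>2 / 2))"
proof -
  have "(\<integral>x. gauss x * cis (- (t * x)) \<partial>lborel) = (\<integral>x. of_real (sqrt (2 * pi)) * (of_real (std_normal_density x) * cis (- (t * x))) \<partial>lborel)"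
    by (rule Bochner_Integration.integral_cong) (simp_all add: gauss_def std_normal_density_def)
  also have "\<dots> = of_real (sqrt (2 * pi)) * (\<integral>x. of_real (std_normal_density x) * cis (- (t * x)) \<partial>lborel)"
    by (rule integral_mult_right_zero)
  finally show ?thesis unfolding fourierB_def using gauss_ft_lborel[of t] by simp
qed

lemma gauss_borel[measurable]: "gauss \<in> borel_measurable borel"
  unfolding gauss_def by measurable

lemma fourier_gauss: "fourier gauss x = complex_of_real (sqrt (2 * pi) * exp (- x\<^sup>2 / 2))"
  using fourier_eq_B[OF gauss_borel] fourierB_gauss by simp

lemma wit_borel[measurable]: "wit \<delta> R \<in> borel_measurable borel"
  unfolding wit_def by measurable

lemma norm_wit: "0 \<le> \<delta> \<Longrightarrow> cmod (wit \<delta> R x) = \<delta> * std_normal_density x"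
  by (simp add: wit_def norm_mult)

lemma wit_integrable: assumes "0 \<le> \<delta>" shows "integrable lborel (wit \<delta> R)"
proof -
  have "(\<integral>\<^sup>+x. ennreal (cmod (wit \<delta> R x)) \<partial>lborel) = (\<integral>\<^sup>+x. ennreal \<delta> * ennreal (std_normal_density x) \<partial>lborel)"
    using assms by (simp add: norm_wit ennreal_mult)
  also have "\<dots> = ennreal \<delta>" by (subst nn_integral_cmult) (auto simp: nd_int)
  finally show ?thesis by (simp add: integrable_iff_bounded)
qed

lemma fourierB_wit: "fourierB (wit \<delta> R) \<gamma> = complex_of_real (\<delta> * exp (- (\<gamma> - R)\<^sup>2 / 2))"
proof -
  have "(\<integral>x. wit \<delta> R x * cis (- (\<gamma> * x)) \<partial>lborel) = (\<integral>x. of_real \<delta> * (of_real (std_normal_density x) * cis (- ((\<gamma> - R) * x))) \<partial>lborel)"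
    by (rule Bochner_Integration.integral_cong) (simp_all add: wit_def cis_mult algebra_simps)
  also have "\<dots> = of_real \<delta> * (\<integral>x. of_real (std_normal_density x) * cis (- ((\<gamma> - R) * x)) \<partial>lborel)"
    by (rule integral_mult_right_zero)
  finally show ?thesis unfolding fourierB_def using gauss_ft_lborel[of "\<gamma> - R"] by simp
qed




lemma gl_lower:
  assumes "1 < p"
  shows "ennreal ((p-1) powr \<theta>) * (\<integral>\<^sup>+x. ennreal (cmod (f x) * a x powr ((p-1)/p)) \<partial>lebesgue) \<le> gl_norm p \<theta> a f"
proof -
  let ?I = "\<integral>\<^sup>+x. ennreal (cmod (f x) * a x powr ((p-1)/p)) \<partial>lebesgue"
  have "gl_term p \<theta> a f (p-1) \<le> gl_norm p \<theta> a f"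
    unfolding gl_norm_def by (rule SUP_upper) (use assms in auto)
  moreover have "gl_term p \<theta> a f (p-1) = ennreal ((p-1) powr \<theta>) * ?I"
  proof (cases "?I = \<infinity>")
    case True
    have "0 < (p-1) powr \<theta>" using assms by simp
    then show ?thesis using True unfolding gl_term_def Let_def
      by (simp add: ennreal_mult_top)
  next
    case False
    then show ?thesis unfolding gl_term_def Let_def
      by (simp add: ennreal_mult ennreal_enn2real_if)
  qed
  ultimately show ?thesis by simp
qed

lemma gl_norm_le:
  assumes p: "1 < p" and pP: "p \<le> P" and y: "0 \<le> y" "y \<le> 1" and th: "0 \<le> \<theta>"
    and I: "\<And>\<epsilon>. 0 < \<epsilon> \<Longrightarrow> \<epsilon> \<le> p - 1 \<Longrightarrow>
        (\<integral>\<^sup>+x. ennreal (cmod (f x) powr (p - \<epsilon>) * a x powr (\<epsilon> / p)) \<partial>lebesgue) \<le> ennreal y"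
  shows "gl_norm p \<theta> a f \<le> ennreal ((p-1) powr \<theta> * y powr (1/P))"
  unfolding gl_norm_def
proof (rule SUP_least)
  fix \<epsilon> assume "\<epsilon> \<in> {0<..p - 1}"
  then have e: "0 < \<epsilon>" "\<epsilon> \<le> p - 1" by auto
  let ?I = "\<integral>\<^sup>+x. ennreal (cmod (f x) powr (p - \<epsilon>) * a x powr (\<epsilon> / p)) \<partial>lebesgue"
  have Iy: "?I \<le> ennreal y" by (rule I[OF e])
  then have fin: "?I \<noteq> \<infinity>" by (auto simp: top_unique)
  have le: "enn2real ?I \<le> y" using Iy y by (simp add: enn2real_leI)
  have "\<epsilon> powr \<theta> \<le> (p-1) powr \<theta>" using e th by (intro powr_mono2) auto
  moreover have "enn2real ?I powr (1 / (p - \<epsilon>)) \<le> y powr (1/P)"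
  proof -
    have "enn2real ?I powr (1 / (p - \<epsilon>)) \<le> y powr (1 / (p - \<epsilon>))"
      using le e p by (intro powr_mono2) auto
    also have "\<dots> \<le> y powr (1/P)"
      using e p pP y by (intro powr_mono') (auto simp: field_simps)
    finally show ?thesis .
  qed
  ultimately have "\<epsilon> powr \<theta> * enn2real ?I powr (1 / (p - \<epsilon>)) \<le> (p-1) powr \<theta> * y powr (1/P)"
    by (intro mult_mono) auto
  then show "gl_term p \<theta> a f \<epsilon> \<le> ennreal ((p-1) powr \<theta> * y powr (1/P))"
    unfolding gl_term_def Let_def using fin by (simp add: ennreal_leI)
qed

lemma std_le1: "std_normal_density x \<le> 1"
proof -
  have "1 \<le> sqrt (2 * pi)" using pi_gt3 by simp
  then have "1 / sqrt (2 * pi) \<le> 1" by simp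
  moreover have "exp (- x\<^sup>2 / 2) \<le> 1" by simp
  ultimately have "(1 / sqrt (2 * pi)) * exp (- x\<^sup>2 / 2) \<le> 1 * 1"
    by (intro mult_mono) auto
  then show ?thesis unfolding std_normal_density_def by simp
qed

lemma sqrt2pi_le3: "sqrt (2 * pi) \<le> 3"
proof -
  have "2 * pi \<le> 3\<^sup>2" using pi_less_4 by simp
  then show ?thesis using real_sqrt_le_iff[of "2*pi" "3\<^sup>2"] by simp
qed

lemma powr_le_self_01: "0 \<le> (u::real) \<Longrightarrow> u \<le> 1 \<Longrightarrow> 1 \<le> r \<Longrightarrow> u powr r \<le> u"
  using powr_mono'[of 1 r u] by simp

lemma wit_I_p:
  assumes d: "0 \<le> \<delta>" "\<delta> \<le> 1" and e: "0 < \<epsilon>" "\<epsilon> \<le> p - 1"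
  shows "(\<integral>\<^sup>+x. ennreal (cmod (wit \<delta> R x) powr (p - \<epsilon>) * (\<lambda>_. 1::real) x powr (\<epsilon> / p)) \<partial>lebesgue) \<le> ennreal \<delta>"
proof -
  have "(\<integral>\<^sup>+x. ennreal (cmod (wit \<delta> R x) powr (p - \<epsilon>) * (\<lambda>_. 1::real) x powr (\<epsilon> / p)) \<partial>lebesgue)
      \<le> (\<integral>\<^sup>+x. ennreal \<delta> * ennreal (std_normal_density x) \<partial>lebesgue)"
  proof (intro nn_integral_mono)
    fix x
    have "0 \<le> \<delta> * std_normal_density x" using d by simp
    moreover have "\<delta> * std_normal_density x \<le> 1" using d std_le1[of x] by (simp add: mult_le_one)
    ultimately have "(\<delta> * std_normal_density x) powr (p - \<epsilon>) \<le> \<delta> * std_normal_density x"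
      using e by (intro powr_le_self_01) auto
    then show "ennreal (cmod (wit \<delta> R x) powr (p - \<epsilon>) * (\<lambda>_. 1::real) x powr (\<epsilon> / p)) \<le> ennreal \<delta> * ennreal (std_normal_density x)"
      using d by (simp add: norm_wit ennreal_mult[symmetric] ennreal_leI)
  qed
  also have "\<dots> = ennreal \<delta>"
    by (simp add: nn_integral_completion nn_integral_cmult nd_int)
  finally show ?thesis .
qed

lemma wit_I_q:
  assumes d: "0 \<le> \<delta>" "\<delta> \<le> 1" and e: "0 < \<epsilon>" "\<epsilon> \<le> q - 1" and q: "1 < q"
    and MT: "0 \<le> M" "0 \<le> T" "T \<le> R" "M * (2 * T) * exp (- (R - T)\<^sup>2 / 2) \<le> 1"
  shows "(\<integral>\<^sup>+\<gamma>. ennreal (cmod (fourierB (wit \<delta> R) \<gamma>) powr (q - \<epsilon>) * bw M T \<gamma> powr (\<epsilon> / q)) \<partial>lebesgue) \<le> ennreal (4 * \<delta>)"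
proof -
  define E0 where "E0 = exp (- (R - T)\<^sup>2 / 2)"
  have "(\<integral>\<^sup>+\<gamma>. ennreal (cmod (fourierB (wit \<delta> R) \<gamma>) powr (q - \<epsilon>) * bw M T \<gamma> powr (\<epsilon> / q)) \<partial>lebesgue)
      \<le> (\<integral>\<^sup>+\<gamma>. ennreal (\<delta> * sqrt (2 * pi)) * ennreal (normal_density R 1 \<gamma>)
                 + ennreal (\<delta> * M * E0) * indicator {-T..T} \<gamma> \<partial>lborel)"
    unfolding nn_integral_completion
  proof (intro nn_integral_mono)
    fix \<gamma>
    define u where "u = \<delta> * exp (- (\<gamma> - R)\<^sup>2 / 2)"
    have u0: "0 \<le> u" "u \<le> 1" using d by (auto simp: u_def mult_le_one)
    have b1: "1 \<le> bw M T \<gamma>" using MT by (simp add: bw_def)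
    have "u powr (q - \<epsilon>) \<le> u" using u0 e by (intro powr_le_self_01) auto
    moreover have "bw M T \<gamma> powr (\<epsilon> / q) \<le> bw M T \<gamma>"
      using powr_mono[of "\<epsilon>/q" 1 "bw M T \<gamma>"] b1 e q by (simp add: field_simps)
    ultimately have "u powr (q - \<epsilon>) * bw M T \<gamma> powr (\<epsilon> / q) \<le> u * bw M T \<gamma>"
      using u0 b1 by (intro mult_mono) auto
    also have "\<dots> = u + \<delta> * M * exp (- (\<gamma> - R)\<^sup>2 / 2) * indicator {-T..T} \<gamma>"
      by (simp add: u_def bw_def algebra_simps)
    also have "\<dots> \<le> \<delta> * sqrt (2 * pi) * normal_density R 1 \<gamma> + \<delta> * M * E0 * indicator {-T..T} \<gamma>"
    proof -
      have "u = \<delta> * sqrt (2 * pi) * normal_density R 1 \<gamma>"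
        by (simp add: u_def normal_density_def)
      moreover have "exp (- (\<gamma> - R)\<^sup>2 / 2) * indicator {-T..T} \<gamma> \<le> E0 * indicator {-T..T} \<gamma>"
      proof (cases "\<gamma> \<in> {-T..T}")
        case True
        then have "R - T \<le> R - \<gamma>" by simp
        then have "(R - T)\<^sup>2 \<le> (R - \<gamma>)\<^sup>2"
          using MT by (intro power_mono) auto
        then have "(R - T)\<^sup>2 \<le> (\<gamma> - R)\<^sup>2" by (simp add: power2_commute)
        then show ?thesis using True by (simp add: E0_def)
      qed simp
      then have "\<delta> * M * (exp (- (\<gamma> - R)\<^sup>2 / 2) * indicator {-T..T} \<gamma>) \<le> \<delta> * M * (E0 * indicator {-T..T} \<gamma>)"
        using d MT by (intro mult_left_mono) auto
      ultimately show ?thesis by (simp add: mult.assoc)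
    qed
    finally have calc: "u powr (q - \<epsilon>) * bw M T \<gamma> powr (\<epsilon> / q)
       \<le> \<delta> * sqrt (2 * pi) * normal_density R 1 \<gamma> + \<delta> * M * E0 * indicator {-T..T} \<gamma>" .
    have c: "cmod (fourierB (wit \<delta> R) \<gamma>) = u" using d by (simp add: fourierB_wit u_def norm_mult)
    have nn1: "0 \<le> \<delta> * sqrt (2 * pi) * normal_density R 1 \<gamma>" using d by simp
    have nn2: "0 \<le> \<delta> * M * E0" using d MT by (simp add: E0_def)
    have "ennreal (cmod (fourierB (wit \<delta> R) \<gamma>) powr (q - \<epsilon>) * bw M T \<gamma> powr (\<epsilon> / q))
       \<le> ennreal (\<delta> * sqrt (2 * pi) * normal_density R 1 \<gamma> + \<delta> * M * E0 * indicator {-T..T} \<gamma>)"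
      unfolding c by (rule ennreal_leI[OF calc])
    also have "\<dots> = ennreal (\<delta> * sqrt (2 * pi) * normal_density R 1 \<gamma>) + ennreal (\<delta> * M * E0 * indicator {-T..T} \<gamma>)"
      using nn1 nn2 by (intro ennreal_plus) auto
    also have "\<dots> = ennreal (\<delta> * sqrt (2 * pi)) * ennreal (normal_density R 1 \<gamma>) + ennreal (\<delta> * M * E0) * indicator {-T..T} \<gamma>"
      using d nn2 by (simp add: ennreal_mult' ennreal_indicator[symmetric] ennreal_mult[symmetric] del: ennreal_mult')
    finally show "ennreal (cmod (fourierB (wit \<delta> R) \<gamma>) powr (q - \<epsilon>) * bw M T \<gamma> powr (\<epsilon> / q))
       \<le> ennreal (\<delta> * sqrt (2 * pi)) * ennreal (normal_density R 1 \<gamma>) + ennreal (\<delta> * M * E0) * indicator {-T..T} \<gamma>" .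
  qed
  also have "\<dots> = ennreal (\<delta> * sqrt (2 * pi)) + ennreal (\<delta> * M * E0) * ennreal (2 * T)"
    using MT by (subst nn_integral_add) (auto simp: nn_integral_cmult nd_int)
  also have "\<dots> = ennreal (\<delta> * sqrt (2 * pi) + \<delta> * (M * (2 * T) * E0))"
  proof -
    have E0: "0 \<le> E0" by (simp add: E0_def)
    have "ennreal (\<delta> * M * E0) * ennreal (2 * T) = ennreal (\<delta> * (M * (2 * T) * E0))"
      using d MT E0 by (simp add: ennreal_mult[symmetric] mult_ac)
    moreover have "ennreal (\<delta> * sqrt (2 * pi)) + ennreal (\<delta> * (M * (2 * T) * E0)) = ennreal (\<delta> * sqrt (2 * pi) + \<delta> * (M * (2 * T) * E0))"
      using d MT E0 by (intro ennreal_plus[symmetric]) auto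
    ultimately show ?thesis by simp
  qed
  also have "\<dots> \<le> ennreal (4 * \<delta>)"
  proof (intro ennreal_leI)
    have "\<delta> * sqrt (2 * pi) \<le> \<delta> * 3" using d sqrt2pi_le3 by (intro mult_left_mono) auto
    moreover have "\<delta> * (M * (2 * T) * E0) \<le> \<delta> * 1" using d MT by (intro mult_left_mono) (auto simp: E0_def)
    ultimately show "\<delta> * sqrt (2 * pi) + \<delta> * (M * (2 * T) * E0) \<le> 4 * \<delta>" by simp
  qed
  finally show ?thesis .
qed




lemma wit_in_X:
  assumes p: "1 < p" and q: "1 < q" and th: "0 \<le> \<theta>1" "0 \<le> \<theta>2"
    and P: "p \<le> P" "q \<le> P"
    and d: "0 < \<delta>" "4 * \<delta> \<le> 1"
    and hp: "(p-1) powr \<theta>1 * (4 * \<delta>) powr (1/P) \<le> 1/2"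
    and hq: "(q-1) powr \<theta>2 * (4 * \<delta>) powr (1/P) \<le> 1/2"
    and MT: "0 \<le> M" "0 \<le> T" "T \<le> R" "M * (2 * T) * exp (- (R - T)\<^sup>2 / 2) \<le> 1"
  shows "wit \<delta> R \<in> A_space p \<theta>1 q \<theta>2 (\<lambda>_. 1) (bw M T)"
    and "A_norm p \<theta>1 q \<theta>2 (\<lambda>_. 1) (bw M T) (wit \<delta> R) \<le> 1"
proof -
  have d1: "0 \<le> \<delta>" "\<delta> \<le> 1" using d by auto
  have gp: "gl_norm p \<theta>1 (\<lambda>_. 1) (wit \<delta> R) \<le> ennreal (1/2)"
  proof -
    have "gl_norm p \<theta>1 (\<lambda>_. 1) (wit \<delta> R) \<le> ennreal ((p-1) powr \<theta>1 * (4 * \<delta>) powr (1/P))"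
    proof (rule gl_norm_le[OF p P(1) _ d(2) th(1)])
      fix \<epsilon> :: real assume "0 < \<epsilon>" "\<epsilon> \<le> p - 1"
      then have "(\<integral>\<^sup>+x. ennreal (cmod (wit \<delta> R x) powr (p - \<epsilon>) * (\<lambda>_. 1::real) x powr (\<epsilon> / p)) \<partial>lebesgue) \<le> ennreal \<delta>"
        by (rule wit_I_p[OF d1])
      also have "\<dots> \<le> ennreal (4 * \<delta>)" using d by (intro ennreal_leI) auto
      finally show "(\<integral>\<^sup>+x. ennreal (cmod (wit \<delta> R x) powr (p - \<epsilon>) * (\<lambda>_. 1::real) x powr (\<epsilon> / p)) \<partial>lebesgue) \<le> ennreal (4 * \<delta>)" .
    qed (use d in auto)
    also have "\<dots> \<le> ennreal (1/2)" using hp by (intro ennreal_leI)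
    finally show ?thesis .
  qed
  define g where "g = fourierB (wit \<delta> R)"
  have g_eq: "g = (\<lambda>\<gamma>. complex_of_real (\<delta> * exp (- (\<gamma> - R)\<^sup>2 / 2)))"
    by (simp add: g_def fourierB_wit fun_eq_iff)
  have gq: "gl_norm q \<theta>2 (bw M T) g \<le> ennreal (1/2)"
  proof -
    have "gl_norm q \<theta>2 (bw M T) g \<le> ennreal ((q-1) powr \<theta>2 * (4 * \<delta>) powr (1/P))"
      unfolding g_def
      by (rule gl_norm_le[OF q P(2) _ d(2) th(2)]) (use d in \<open>auto intro!: wit_I_q[OF d1 _ _ q MT]\<close>)
    also have "\<dots> \<le> ennreal (1/2)" using hq by (intro ennreal_leI)
    finally show ?thesis .
  qed
  have half: "ennreal (1/2) + ennreal (1/2) = 1"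
  proof -
    have "ennreal (1/2) + ennreal (1/2) = ennreal (1/2 + 1/2)" by (rule ennreal_plus[symmetric]) auto
    then show ?thesis by simp
  qed
  have gm: "g \<in> borel_measurable lebesgue"
    unfolding g_eq by (rule measurable_completion) simp
  have wm: "wit \<delta> R \<in> borel_measurable lebesgue"
    by (rule measurable_completion) simp
  have gGL: "g \<in> GL q \<theta>2 (bw M T)"
  proof -
    have "gl_norm q \<theta>2 (bw M T) g < \<infinity>" by (metis gq ennreal_less_top infinity_ennreal_def order.strict_trans1)
    then show ?thesis unfolding GL_def using gm by auto
  qed
  have wGL: "wit \<delta> R \<in> GL p \<theta>1 (\<lambda>_. 1)"
  proof -
    have "gl_norm p \<theta>1 (\<lambda>_. 1) (wit \<delta> R) < \<infinity>" by (metis gp ennreal_less_top infinity_ennreal_def order.strict_trans1)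
    then show ?thesis unfolding GL_def using wm by auto
  qed
  have ft: "is_fourier_transform (wit \<delta> R) g"
    unfolding g_def using d by (intro is_ft_integrable wit_integrable) auto
  show "wit \<delta> R \<in> A_space p \<theta>1 q \<theta>2 (\<lambda>_. 1) (bw M T)"
    unfolding A_space_def using wGL gGL ft by blast
  have "(INF g\<in>{g. g \<in> GL q \<theta>2 (bw M T) \<and> is_fourier_transform (wit \<delta> R) g}. gl_norm q \<theta>2 (bw M T) g)
     \<le> gl_norm q \<theta>2 (bw M T) g"
    by (rule INF_lower) (use gGL ft in auto)
  then have "A_norm p \<theta>1 q \<theta>2 (\<lambda>_. 1) (bw M T) (wit \<delta> R) \<le> ennreal (1/2) + ennreal (1/2)"
    unfolding A_norm_def using gp gq by (intro add_mono) auto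
  then show "A_norm p \<theta>1 q \<theta>2 (\<lambda>_. 1) (bw M T) (wit \<delta> R) \<le> 1" using half by simp
qed




lemma bw_leb[measurable]: "bw M T \<in> borel_measurable lebesgue"
  by (rule measurable_completion) simp

lemma dual_bound:
  fixes a :: "real \<Rightarrow> real"
  assumes q: "1 < q" and K0: "0 < K0"
    and pw: "\<And>\<gamma>. exp (- \<gamma>\<^sup>2 / 2) \<le> K0 * bw M T \<gamma> powr ((q-1)/q)"
    and f: "f \<in> A_space p \<theta>1 q \<theta>2 a (bw M T)" and N: "A_norm p \<theta>1 q \<theta>2 a (bw M T) f \<le> 1"
  shows "cmod (canon_embed (fourier gauss) f) \<le> K0 / (q-1) powr \<theta>2"
proof -
  define X where "X = cmod (canon_embed (fourier gauss) f)"
  define S where "S = {g. g \<in> GL q \<theta>2 (bw M T) \<and> is_fourier_transform f g}"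
  have qp: "0 < (q-1) powr \<theta>2" using q by simp
  have key: "ennreal ((q-1) powr \<theta>2 / K0 * X) \<le> gl_norm q \<theta>2 (bw M T) g" if g: "g \<in> S" for g
  proof -
    have gm[measurable]: "g \<in> borel_measurable lebesgue" and ft: "is_fourier_transform f g"
      using g by (auto simp: S_def GL_def)
    have "(\<integral>x. g x * gauss x \<partial>lebesgue) = (\<integral>x. f x * fourier gauss x \<partial>lebesgue)"
      using ft schwartz_gauss unfolding is_fourier_transform_def by blast
    then have eq: "canon_embed (fourier gauss) f = (\<integral>x. g x * gauss x \<partial>lebesgue)"
      by (simp only: canon_embed_def)
    have gi: "integrable lebesgue (\<lambda>x. g x * gauss x)"
      using ft schwartz_gauss unfolding is_fourier_transform_def by blast
    let ?J = "\<integral>\<^sup>+\<gamma>. ennreal (cmod (g \<gamma>) * bw M T \<gamma> powr ((q-1)/q)) \<partial>lebesgue"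
    have "ennreal X \<le> (\<integral>\<^sup>+\<gamma>. ennreal (cmod (g \<gamma> * gauss \<gamma>)) \<partial>lebesgue)"
      unfolding X_def eq by (rule integral_norm_bound_ennreal[OF gi])
    also have "\<dots> \<le> (\<integral>\<^sup>+\<gamma>. ennreal K0 * ennreal (cmod (g \<gamma>) * bw M T \<gamma> powr ((q-1)/q)) \<partial>lebesgue)"
    proof (rule nn_integral_mono)
      fix \<gamma>
      have "cmod (g \<gamma> * gauss \<gamma>) = cmod (g \<gamma>) * exp (- \<gamma>\<^sup>2 / 2)" by (simp add: gauss_def norm_mult)
      also have "\<dots> \<le> cmod (g \<gamma>) * (K0 * bw M T \<gamma> powr ((q-1)/q))" by (intro mult_left_mono pw) auto
      also have "\<dots> = K0 * (cmod (g \<gamma>) * bw M T \<gamma> powr ((q-1)/q))" by (simp add: mult_ac)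
      finally have "ennreal (cmod (g \<gamma> * gauss \<gamma>)) \<le> ennreal (K0 * (cmod (g \<gamma>) * bw M T \<gamma> powr ((q-1)/q)))"
        by (rule ennreal_leI)
      then show "ennreal (cmod (g \<gamma> * gauss \<gamma>)) \<le> ennreal K0 * ennreal (cmod (g \<gamma>) * bw M T \<gamma> powr ((q-1)/q))"
        using K0 by (simp add: ennreal_mult)
    qed
    also have "\<dots> = ennreal K0 * ?J" by (rule nn_integral_cmult) measurable
    finally have A: "ennreal X \<le> ennreal K0 * ?J" .
    have "ennreal ((q-1) powr \<theta>2 / K0 * X) = ennreal ((q-1) powr \<theta>2 / K0) * ennreal X"
      using K0 by (intro ennreal_mult) (auto simp: X_def)
    also have "\<dots> \<le> ennreal ((q-1) powr \<theta>2 / K0) * (ennreal K0 * ?J)"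
      by (rule mult_left_mono[OF A]) simp
    also have "\<dots> = ennreal ((q-1) powr \<theta>2) * ?J"
    proof -
      have "ennreal ((q-1) powr \<theta>2 / K0) * ennreal K0 = ennreal ((q-1) powr \<theta>2 / K0 * K0)"
        using K0 qp by (intro ennreal_mult[symmetric]) auto
      also have "\<dots> = ennreal ((q-1) powr \<theta>2)" using K0 by simp
      finally show ?thesis by (simp add: mult.assoc[symmetric])
    qed
    also have "\<dots> \<le> gl_norm q \<theta>2 (bw M T) g" by (rule gl_lower[OF q])
    finally show ?thesis .
  qed
  have "ennreal ((q-1) powr \<theta>2 / K0 * X) \<le> (INF g\<in>S. gl_norm q \<theta>2 (bw M T) g)"
    by (rule INF_greatest) (rule key)
  also have "\<dots> \<le> A_norm p \<theta>1 q \<theta>2 a (bw M T) f"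
    unfolding A_norm_def S_def by (rule add_increasing) auto
  also have "\<dots> \<le> 1" by (rule N)
  finally have "(q-1) powr \<theta>2 / K0 * X \<le> 1" by (simp add: ennreal_le_1)
  then have "X \<le> K0 / (q-1) powr \<theta>2" using K0 qp by (simp add: field_simps)
  then show ?thesis by (simp add: X_def)
qed

lemma fourier_gauss_fun: "fourier gauss = (\<lambda>x. complex_of_real (sqrt (2 * pi) * exp (- x\<^sup>2 / 2)))"
  by (simp add: fun_eq_iff fourier_gauss)

lemma G_assoc:
  assumes p: "1 < p"
  shows "fourier gauss \<in> assoc_space (A_space p \<theta>1 q \<theta>2 (\<lambda>_. 1) b) (A_norm p \<theta>1 q \<theta>2 (\<lambda>_. 1) b)"
proof -
  have pp: "0 < (p-1) powr \<theta>1" using p by simp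
  have Gm: "fourier gauss \<in> borel_measurable lebesgue"
    unfolding fourier_gauss_fun by (rule measurable_completion) simp
  have "assoc_norm (A_space p \<theta>1 q \<theta>2 (\<lambda>_. 1) b) (A_norm p \<theta>1 q \<theta>2 (\<lambda>_. 1) b) (fourier gauss)
      \<le> ennreal (sqrt (2 * pi) / (p-1) powr \<theta>1)"
    unfolding assoc_norm_def
  proof (rule SUP_least, clarify)
    fix f assume f: "f \<in> A_space p \<theta>1 q \<theta>2 (\<lambda>_. 1) b" and N: "A_norm p \<theta>1 q \<theta>2 (\<lambda>_. 1) b f \<le> 1"
    have fm[measurable]: "f \<in> borel_measurable lebesgue" using f by (auto simp: A_space_def GL_def)
    let ?J = "\<integral>\<^sup>+x. ennreal (cmod (f x) * (\<lambda>_. 1::real) x powr ((p-1)/p)) \<partial>lebesgue"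
    have J: "ennreal ((p-1) powr \<theta>1) * ?J \<le> 1"
    proof -
      have "ennreal ((p-1) powr \<theta>1) * ?J \<le> gl_norm p \<theta>1 (\<lambda>_. 1) f" by (rule gl_lower[OF p])
      also have "\<dots> \<le> A_norm p \<theta>1 q \<theta>2 (\<lambda>_. 1) b f" unfolding A_norm_def by simp
      finally show ?thesis using N by simp
    qed
    have "(\<integral>\<^sup>+x. ennreal (cmod (f x * fourier gauss x)) \<partial>lebesgue) \<le> (\<integral>\<^sup>+x. ennreal (sqrt (2 * pi)) * ennreal (cmod (f x) * (\<lambda>_. 1::real) x powr ((p-1)/p)) \<partial>lebesgue)"
    proof (rule nn_integral_mono)
      fix x
      have "cmod (f x * fourier gauss x) = cmod (f x) * (sqrt (2 * pi) * exp (- x\<^sup>2 / 2))"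
        by (simp add: fourier_gauss norm_mult)
      also have "\<dots> \<le> cmod (f x) * (sqrt (2 * pi) * 1)"
        by (intro mult_left_mono) auto
      finally show "ennreal (cmod (f x * fourier gauss x)) \<le> ennreal (sqrt (2 * pi)) * ennreal (cmod (f x) * (\<lambda>_. 1::real) x powr ((p-1)/p))"
        by (simp add: ennreal_mult[symmetric] ennreal_leI mult_ac)
    qed
    also have "\<dots> = ennreal (sqrt (2 * pi)) * ?J" by (rule nn_integral_cmult) measurable
    also have "\<dots> = ennreal (sqrt (2 * pi) / (p-1) powr \<theta>1) * (ennreal ((p-1) powr \<theta>1) * ?J)"
      using pp by (simp add: ennreal_mult[symmetric] mult.assoc[symmetric])
    also have "\<dots> \<le> ennreal (sqrt (2 * pi) / (p-1) powr \<theta>1) * 1"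
      by (rule mult_left_mono[OF J]) simp
    finally show "(\<integral>\<^sup>+x. ennreal (cmod (f x * fourier gauss x)) \<partial>lebesgue) \<le> ennreal (sqrt (2 * pi) / (p-1) powr \<theta>1)"
      by simp
  qed
  then have "assoc_norm (A_space p \<theta>1 q \<theta>2 (\<lambda>_. 1) b) (A_norm p \<theta>1 q \<theta>2 (\<lambda>_. 1) b) (fourier gauss) < \<infinity>"
    by (metis ennreal_less_top infinity_ennreal_def order.strict_trans1)
  then show ?thesis unfolding assoc_space_def using Gm by simp
qed

lemma wit_G_lower:
  assumes d: "0 \<le> \<delta>"
  shows "ennreal (\<delta> * exp (-1)) \<le> (\<integral>\<^sup>+x. ennreal (cmod (wit \<delta> R x * fourier gauss x)) \<partial>lebesgue)"
proof -
  have "(\<integral>\<^sup>+x. ennreal (\<delta> * exp (-1)) * indicator {0..1::real} x \<partial>lebesgue) \<le> (\<integral>\<^sup>+x. ennreal (cmod (wit \<delta> R x * fourier gauss x)) \<partial>lebesgue)"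
  proof (intro nn_integral_mono)
    fix x :: real
    have c: "cmod (wit \<delta> R x * fourier gauss x) = \<delta> * exp (- x\<^sup>2)"
    proof -
      have "cmod (wit \<delta> R x * fourier gauss x) = \<delta> * std_normal_density x * (sqrt (2 * pi) * exp (- x\<^sup>2 / 2))"
        using d by (simp add: norm_wit fourier_gauss norm_mult)
      also have "\<dots> = \<delta> * (exp (- x\<^sup>2 / 2) * exp (- x\<^sup>2 / 2))"
        by (simp add: std_normal_density_def)
      also have "\<dots> = \<delta> * exp (- x\<^sup>2)" by (simp flip: exp_add)
      finally show ?thesis .
    qed
    show "ennreal (\<delta> * exp (-1)) * indicator {0..1} x \<le> ennreal (cmod (wit \<delta> R x * fourier gauss x))"
    proof (cases "x \<in> {0..1}")
      case True
      then have "x\<^sup>2 \<le> 1" by (auto simp: power_le_one)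
      then have "\<delta> * exp (-1) \<le> \<delta> * exp (- x\<^sup>2)" using d by (intro mult_left_mono) auto
      then show ?thesis using True c by (simp add: ennreal_leI)
    qed simp
  qed
  moreover have "(\<integral>\<^sup>+x. ennreal (\<delta> * exp (-1)) * indicator {0..1::real} x \<partial>lebesgue) = ennreal (\<delta> * exp (-1))"
    by (simp add: nn_integral_completion nn_integral_cmult_indicator)
  ultimately show ?thesis by simp
qed




theorem corollary5:
  fixes p q \<theta>1 \<theta>2 :: real
  assumes "1 < p" and "1 < q" and "0 < \<theta>1" and "0 < \<theta>2"
  shows "\<exists>a b. weight a \<and> weight b \<and>
    \<not> canonically_isometric (A_space p \<theta>1 q \<theta>2 a b) (A_norm p \<theta>1 q \<theta>2 a b)"
proof -
  note p = assms(1) and q = assms(2)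
  define P where "P = max p q"
  define E where "E = max 1 (max ((p-1) powr \<theta>1) ((q-1) powr \<theta>2))"
  define y where "y = (1 / (2 * E)) powr P"
  define \<delta> where "\<delta> = y / 4"
  have P: "p \<le> P" "q \<le> P" "0 < P" using p q by (auto simp: P_def)
  have E1: "1 \<le> E" and Ep: "(p-1) powr \<theta>1 \<le> E" and Eq: "(q-1) powr \<theta>2 \<le> E"
    by (auto simp: E_def)
  have b0: "0 < 1 / (2 * E)" "1 / (2 * E) \<le> 1" using E1 by auto
  have y0: "0 < y" using b0 by (simp add: y_def)
  have y1: "y \<le> 1" unfolding y_def using b0 P by (intro powr_le1) auto
  have yP: "y powr (1/P) = 1 / (2 * E)"
    using b0 P by (simp add: y_def powr_powr)
  have d: "0 < \<delta>" "4 * \<delta> \<le> 1" using y0 y1 by (auto simp: \<delta>_def)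
  have d4: "4 * \<delta> = y" by (simp add: \<delta>_def)
  have hp: "(p-1) powr \<theta>1 * (4 * \<delta>) powr (1/P) \<le> 1/2"
    unfolding d4 yP using Ep E1 by (simp add: field_simps)
  have hq: "(q-1) powr \<theta>2 * (4 * \<delta>) powr (1/P) \<le> 1/2"
    unfolding d4 yP using Eq E1 by (simp add: field_simps)
  have qp: "0 < (q-1) powr \<theta>2" using q by simp
  define K0 where "K0 = (q-1) powr \<theta>2 * \<delta> * exp (-1) / 2"
  have K0: "0 < K0" using qp d by (simp add: K0_def)
  define s where "s = (q-1)/q"
  have s: "0 < s" using q by (simp add: s_def)
  define M where "M = (1/K0) powr (1/s)"
  define T where "T = 2 + \<bar>ln K0\<bar>"
  define R where "R = T + 2 + ln (1 + M * (2 * T))"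
  have M0: "0 \<le> M" by (simp add: M_def)
  have T0: "0 \<le> T" "2 \<le> T" by (auto simp: T_def)
  have MT0: "0 \<le> M * (2 * T)" using M0 T0 by simp
  have TR: "T \<le> R" using MT0 by (simp add: R_def)
  have Rc: "M * (2 * T) * exp (- (R - T)\<^sup>2 / 2) \<le> 1"
  proof -
    define D where "D = R - T"
    have D: "D = 2 + ln (1 + M * (2 * T))" by (simp add: D_def R_def)
    have D2: "2 \<le> D" using MT0 by (simp add: D)
    have "D \<le> D\<^sup>2 / 2" using D2 by (simp add: power2_eq_square field_simps mult_right_mono)
    then have "exp (- D\<^sup>2 / 2) \<le> exp (- D)" by simp
    also have "\<dots> \<le> exp (- ln (1 + M * (2 * T)))" using MT0 by (simp add: D)
    also have "\<dots> = 1 / (1 + M * (2 * T))" using MT0 by (simp add: exp_minus inverse_eq_divide)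
    finally have "M * (2 * T) * exp (- D\<^sup>2 / 2) \<le> M * (2 * T) * (1 / (1 + M * (2 * T)))"
      using MT0 by (intro mult_left_mono) auto
    also have "\<dots> \<le> 1" using MT0 by (simp add: field_simps)
    finally show ?thesis by (simp add: D_def)
  qed
  have pw: "exp (- \<gamma>\<^sup>2 / 2) \<le> K0 * bw M T \<gamma> powr ((q-1)/q)" for \<gamma>
  proof (cases "\<gamma> \<in> {-T..T}")
    case True
    have "1 / K0 = M powr s" using K0 s by (simp add: M_def powr_powr)
    also have "\<dots> \<le> (1 + M) powr s" using M0 s by (intro powr_mono2) auto
    finally have "1 \<le> K0 * (1 + M) powr s" using K0 by (simp add: field_simps)
    moreover have "exp (- \<gamma>\<^sup>2 / 2) \<le> 1" by simp
    ultimately have "exp (- \<gamma>\<^sup>2 / 2) \<le> K0 * (1 + M) powr s" by linarith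
    then show ?thesis using True by (simp add: bw_def s_def)
  next
    case False
    then have "T < \<bar>\<gamma>\<bar>" by auto
    then have "T\<^sup>2 \<le> \<gamma>\<^sup>2" using T0 by (metis abs_ge_zero less_imp_le power2_abs power_mono)
    moreover have "T \<le> T\<^sup>2 / 2" using T0 by (simp add: power2_eq_square field_simps mult_right_mono)
    ultimately have "- \<gamma>\<^sup>2 / 2 \<le> ln K0" by (simp add: T_def)
    then have "exp (- \<gamma>\<^sup>2 / 2) \<le> K0" using K0 by (metis exp_le_cancel_iff exp_ln)
    then show ?thesis using False by (simp add: bw_def)
  qed
  define a :: "real \<Rightarrow> real" where "a = (\<lambda>_. 1)"
  define b where "b = bw M T"
  define X where "X = A_space p \<theta>1 q \<theta>2 a b"
  define N where "N = A_norm p \<theta>1 q \<theta>2 a b"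
  define G where "G = fourier gauss"
  have wX: "wit \<delta> R \<in> X" and wN: "N (wit \<delta> R) \<le> 1"
    using wit_in_X[OF p q _ _ P(1,2) d hp hq M0 T0(1) TR Rc] assms
    by (auto simp: X_def N_def a_def b_def)
  have GA: "G \<in> assoc_space X N"
    unfolding G_def X_def N_def a_def using G_assoc[OF p] .
  have dual: "dual_norm X N (canon_embed G) \<le> ennreal (K0 / (q-1) powr \<theta>2)"
    unfolding dual_norm_def
  proof (rule SUP_least, clarify)
    fix f assume "f \<in> X" "N f \<le> 1"
    then have "cmod (canon_embed G f) \<le> K0 / (q-1) powr \<theta>2"
      unfolding G_def X_def N_def b_def by (rule dual_bound[OF q K0 pw])
    then show "ennreal (cmod (canon_embed G f)) \<le> ennreal (K0 / (q-1) powr \<theta>2)" by (rule ennreal_leI)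
  qed
  have assoc: "ennreal (\<delta> * exp (-1)) \<le> assoc_norm X N G"
  proof -
    have "ennreal (\<delta> * exp (-1)) \<le> (\<integral>\<^sup>+x. ennreal (cmod (wit \<delta> R x * G x)) \<partial>lebesgue)"
      unfolding G_def using d by (intro wit_G_lower) auto
    also have "\<dots> \<le> assoc_norm X N G"
      unfolding assoc_norm_def by (rule SUP_upper) (use wX wN in auto)
    finally show ?thesis .
  qed
  have lt: "K0 / (q-1) powr \<theta>2 < \<delta> * exp (-1)"
    using qp d by (simp add: K0_def field_simps)
  have "dual_norm X N (canon_embed G) \<noteq> assoc_norm X N G"
  proof
    assume eq: "dual_norm X N (canon_embed G) = assoc_norm X N G"
    have "ennreal (\<delta> * exp (-1)) \<le> ennreal (K0 / (q-1) powr \<theta>2)"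
      using assoc dual eq by simp
    then have "\<delta> * exp (-1) \<le> K0 / (q-1) powr \<theta>2"
      using ennreal_le_iff[of "K0 / (q-1) powr \<theta>2"] K0 qp by auto
    then show False using lt by simp
  qed
  then have "\<not> canonically_isometric X N"
    unfolding canonically_isometric_def using GA by blast
  moreover have "weight a" "weight b" unfolding a_def b_def using weight_one weight_bw[OF M0] by auto
  ultimately show ?thesis unfolding X_def N_def by blast
qed


end
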